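(* For every $n\geq 1$, there are at least $2^{2^n-1}$ $n$-cube unique sink orientations that have property L.
   Context: For sets $U,V$ let $U\oplus V=(U\cup V)\setminus(U\cap V)$ and $[U,W]=\{X:U\subseteq X\subseteq W\}$. An $n$-cube orientation is a directed graph $\mathcal{O}$ on vertex set $[\emptyset,[n]]$ (all subsets of $[n]=\{1,\dots,n\}$) containing, for every vertex $V$ and every $i\in[n]$, exactly one of the directed edges $(V,V\oplus\{i\})$, $(V\oplus\{i\},V)$. Its outmap is $\phi_{\mathcal{O}}(V)=\{i: (V,V\oplus\{i\})\in\mathcal{O}\}$. For a vertex $V$, the L-graph $\mathcal{L}_{\mathcal{O}}(V)$ has vertex set $[n]\setminus V$ and an arc $(i,j)$ for distinct $i,j\notin V$ whenever $j\in\phi_{\mathcal{O}}(V)\oplus\phi_{\mathcal{O}}(V\cup\{i\})$. $\mathcal{O}$ has property L if all its L-graphs are acyclic. A face is the subgraph induced by an interval $[U,W]$ of vertices; $\mathcal{O}$ is a unique sink orientation (USO) if every face has exactly one sink (vertex with no outgoing edge within the face). *)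

theory Defs
  imports Main
begin

definition symdiff :: "'a set \<Rightarrow> 'a set \<Rightarrow> 'a set" where
  "symdiff U V = (U \<union> V) - (U \<inter> V)"

definition cube_orientation :: "nat \<Rightarrow> (nat set \<times> nat set) set \<Rightarrow> bool" where
  "cube_orientation n D \<longleftrightarrow>
     D \<subseteq> {(V, symdiff V {i}) | V i. V \<subseteq> {1..n} \<and> i \<in> {1..n}} \<and>
     (\<forall>V \<subseteq> {1..n}. \<forall>i \<in> {1..n}.
        ((V, symdiff V {i}) \<in> D \<and> (symdiff V {i}, V) \<notin> D) \<or>
        ((V, symdiff V {i}) \<notin> D \<and> (symdiff V {i}, V) \<in> D))"

definition outmap :: "(nat set \<times> nat set) set \<Rightarrow> nat set \<Rightarrow> nat set" where
  "outmap D V = {i. (V, symdiff V {i}) \<in> D}"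

definition Lgraph :: "nat \<Rightarrow> (nat set \<times> nat set) set \<Rightarrow> nat set \<Rightarrow> (nat \<times> nat) set" where
  "Lgraph n D V = {(i, j). i \<in> {1..n} - V \<and> j \<in> {1..n} - V \<and> i \<noteq> j \<and>
                       j \<in> symdiff (outmap D V) (outmap D (V \<union> {i}))}"

definition property_L :: "nat \<Rightarrow> (nat set \<times> nat set) set \<Rightarrow> bool" where
  "property_L n D \<longleftrightarrow> (\<forall>V \<subseteq> {1..n}. acyclic (Lgraph n D V))"

definition is_sink_in_face :: "(nat set \<times> nat set) set \<Rightarrow> nat set \<Rightarrow> nat set \<Rightarrow> nat set \<Rightarrow> bool" where
  "is_sink_in_face D U W X \<longleftrightarrow> U \<subseteq> X \<and> X \<subseteq> W \<and>
     (\<forall>Y. U \<subseteq> Y \<and> Y \<subseteq> W \<longrightarrow> (X, Y) \<notin> D)"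

definition is_USO :: "nat \<Rightarrow> (nat set \<times> nat set) set \<Rightarrow> bool" where
  "is_USO n D \<longleftrightarrow> cube_orientation n D \<and>
     (\<forall>U W. U \<subseteq> W \<and> W \<subseteq> {1..n} \<longrightarrow> (\<exists>!X. is_sink_in_face D U W X))"

end

theory Submission
  imports Defs
begin

definition cc :: "nat set set \<Rightarrow> nat set \<Rightarrow> nat \<Rightarrow> bool" where
  "cc S V i \<longleftrightarrow> ((i \<in> V) \<noteq> (insert i {j\<in>V. i<j} \<in> S))"

definition DS :: "nat \<Rightarrow> nat set set \<Rightarrow> (nat set \<times> nat set) set" where
  "DS n S = {(V, symdiff V {i}) | V i. V \<subseteq> {1..n} \<and> i \<in> {1..n} \<and> cc S V i}"

lemma symdiff_inj: "symdiff V {i} = symdiff V {i'} \<Longrightarrow> i = i'"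
proof (rule ccontr)
  assume h: "symdiff V {i} = symdiff V {i'}" and ne: "i \<noteq> i'"
  have "i \<in> symdiff V {i} \<longleftrightarrow> i \<notin> V" unfolding symdiff_def by auto
  moreover have "i \<in> symdiff V {i'} \<longleftrightarrow> i \<in> V" using ne unfolding symdiff_def by auto
  ultimately show False using h by simp
qed

lemma DS_mem: "(X,Y) \<in> DS n S \<longleftrightarrow> X \<subseteq> {1..n} \<and> (\<exists>i\<in>{1..n}. Y = symdiff X {i} \<and> cc S X i)"
  unfolding DS_def by blast

lemma DS_edge: "(X, symdiff X {i}) \<in> DS n S \<longleftrightarrow> X \<subseteq> {1..n} \<and> i \<in> {1..n} \<and> cc S X i"
proof
  assume "(X, symdiff X {i}) \<in> DS n S"
  then obtain i' where "X \<subseteq> {1..n}" "i' \<in> {1..n}" "symdiff X {i} = symdiff X {i'}" "cc S X i'"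
    unfolding DS_mem by blast
  moreover then have "i = i'" using symdiff_inj by metis
  ultimately show "X \<subseteq> {1..n} \<and> i \<in> {1..n} \<and> cc S X i" by simp
next
  assume "X \<subseteq> {1..n} \<and> i \<in> {1..n} \<and> cc S X i"
  then show "(X, symdiff X {i}) \<in> DS n S" unfolding DS_mem by blast
qed

lemma outmap_DS: "X \<subseteq> {1..n} \<Longrightarrow> outmap (DS n S) X = {i\<in>{1..n}. cc S X i}"
  unfolding outmap_def DS_edge by auto

lemma cc_flip: "cc S (symdiff V {i}) i = (\<not> cc S V i)"
proof -
  have "{j \<in> symdiff V {i}. i<j} = {j\<in>V. i<j}" unfolding symdiff_def by auto
  moreover have "(i \<in> symdiff V {i}) = (i \<notin> V)" unfolding symdiff_def by auto
  ultimately show ?thesis unfolding cc_def by auto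
qed

lemma cc_agree:
  assumes "\<forall>j>k. (j\<in>X \<longleftrightarrow> j\<in>X')"
  shows "cc S X k = (cc S X' k = ((k\<in>X) = (k\<in>X')))"
proof -
  have "{j\<in>X. k<j} = {j\<in>X'. k<j}" using assms by auto
  then show ?thesis unfolding cc_def by auto
qed

lemma sink_iff:
  assumes "U \<subseteq> W" "W \<subseteq> {1..n}"
  shows "is_sink_in_face (DS n S) U W X \<longleftrightarrow> U \<subseteq> X \<and> X \<subseteq> W \<and> (\<forall>i\<in>W-U. \<not> cc S X i)"
proof
  assume h: "is_sink_in_face (DS n S) U W X"
  then have X: "U \<subseteq> X" "X \<subseteq> W" unfolding is_sink_in_face_def by auto
  have "\<not> cc S X i" if "i \<in> W - U" for i
  proof
    assume c: "cc S X i"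
    have "U \<subseteq> symdiff X {i}" "symdiff X {i} \<subseteq> W" using X that unfolding symdiff_def by auto
    moreover have "(X, symdiff X {i}) \<in> DS n S" unfolding DS_edge using c X that assms by auto
    ultimately show False using h unfolding is_sink_in_face_def by blast
  qed
  then show "U \<subseteq> X \<and> X \<subseteq> W \<and> (\<forall>i\<in>W-U. \<not> cc S X i)" using X by auto
next
  assume h: "U \<subseteq> X \<and> X \<subseteq> W \<and> (\<forall>i\<in>W-U. \<not> cc S X i)"
  have "(X,Y) \<notin> DS n S" if "U \<subseteq> Y" "Y \<subseteq> W" for Y
  proof
    assume "(X,Y) \<in> DS n S"
    then obtain i where i: "i \<in> {1..n}" "Y = symdiff X {i}" "cc S X i" unfolding DS_mem by blast
    have "i \<in> W - U" using h that i(2) unfolding symdiff_def by auto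
    then show False using h i by auto
  qed
  then show "is_sink_in_face (DS n S) U W X" using h unfolding is_sink_in_face_def by auto
qed

lemma sink_exists: "finite W \<Longrightarrow> U \<subseteq> W \<Longrightarrow> \<exists>X. U \<subseteq> X \<and> X \<subseteq> W \<and> (\<forall>i\<in>W-U. \<not> cc S X i)"
proof (induction "card (W-U)" arbitrary: U W rule: less_induct)
  case less
  show ?case
  proof (cases "W - U = {}")
    case True then show ?thesis using less.prems by (intro exI[of _ U]) auto
  next
    case False
    define k where "k = Max (W-U)"
    have fin: "finite (W-U)" using less.prems by auto
    have kin: "k \<in> W-U" using Max_in fin False k_def by auto
    have kmax: "\<forall>j\<in>W-U. j \<le> k" using Max_ge fin k_def by auto
    have c1: "card ((W-{k}) - U) < card (W-U)"
    proof -
      have "(W-{k}) - U = (W-U) - {k}" by auto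
      then show ?thesis using card_Diff1_less[OF fin kin] by metis
    qed
    obtain X0 where X0: "U \<subseteq> X0" "X0 \<subseteq> W-{k}" "\<forall>i\<in>(W-{k})-U. \<not>cc S X0 i"
      using less.hyps[OF c1] less.prems kin by blast
    show ?thesis
    proof (cases "cc S X0 k")
      case False then show ?thesis using X0 by (intro exI[of _ X0]) auto
    next
      case True
      have c2: "card (W - insert k U) < card (W-U)"
      proof -
        have "W - insert k U = (W-U) - {k}" by auto
        then show ?thesis using card_Diff1_less[OF fin kin] by metis
      qed
      obtain X1 where X1: "insert k U \<subseteq> X1" "X1 \<subseteq> W" "\<forall>i\<in>W - insert k U. \<not>cc S X1 i"
        using less.hyps[OF c2] less.prems kin by blast
      have agree: "\<forall>j>k. (j\<in>X0 \<longleftrightarrow> j\<in>X1)"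
      proof (intro allI impI)
        fix j assume "k < j"
        then have "j \<notin> W - U" using kmax by force
        then show "(j\<in>X0 \<longleftrightarrow> j\<in>X1)" using X0 X1 by auto
      qed
      have "\<not> cc S X1 k" using cc_agree[OF agree, of S] True X0 X1 by auto
      then show ?thesis using X1 by (intro exI[of _ X1]) auto
    qed
  qed
qed

lemma sink_unique:
  assumes "finite W" "U \<subseteq> X" "X \<subseteq> W" "U \<subseteq> X'" "X' \<subseteq> W"
    "\<forall>i\<in>W-U. \<not> cc S X i" "\<forall>i\<in>W-U. \<not> cc S X' i"
  shows "X = X'"
proof (rule ccontr)
  assume ne: "X \<noteq> X'"
  define E where "E = (X - X') \<union> (X' - X)"
  have finE: "finite E" using assms unfolding E_def by (meson finite_Diff finite_UnI finite_subset)
  have neE: "E \<noteq> {}" using ne unfolding E_def by auto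
  define k where "k = Max E"
  have kin: "k \<in> E" using Max_in finE neE k_def by auto
  have kmax: "\<forall>j\<in>E. j \<le> k" using Max_ge finE k_def by auto
  have agree: "\<forall>j>k. (j\<in>X \<longleftrightarrow> j\<in>X')"
  proof (intro allI impI)
    fix j assume "k < j"
    then have "j \<notin> E" using kmax by force
    then show "(j\<in>X \<longleftrightarrow> j\<in>X')" unfolding E_def by auto
  qed
  have kW: "k \<in> W - U" using kin assms unfolding E_def by auto
  have "(k\<in>X) \<noteq> (k\<in>X')" using kin unfolding E_def by auto
  then have "cc S X k \<noteq> cc S X' k" using cc_agree[OF agree, of S] by auto
  then show False using assms(6,7) kW by auto
qed

lemma DS_orient: "cube_orientation n (DS n S)"
  unfolding cube_orientation_def
proof (intro conjI ballI allI impI)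
  show "DS n S \<subseteq> {(V, symdiff V {i}) | V i. V \<subseteq> {1..n} \<and> i \<in> {1..n}}"
    unfolding DS_def by blast
next
  fix V i assume V: "V \<subseteq> {1..n}" and i: "i \<in> {1..n}"
  have sV: "symdiff (symdiff V {i}) {i} = V" unfolding symdiff_def by auto
  have sub: "symdiff V {i} \<subseteq> {1..n}" using V i unfolding symdiff_def by auto
  have "(symdiff V {i}, V) \<in> DS n S \<longleftrightarrow> \<not> cc S V i"
    using DS_edge[of "symdiff V {i}" i n S] sV sub i cc_flip[of S V i] by simp
  moreover have "(V, symdiff V {i}) \<in> DS n S \<longleftrightarrow> cc S V i" using DS_edge V i by auto
  ultimately show "(V, symdiff V {i}) \<in> DS n S \<and> (symdiff V {i}, V) \<notin> DS n S \<or>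
          (V, symdiff V {i}) \<notin> DS n S \<and> (symdiff V {i}, V) \<in> DS n S" by blast
qed

lemma DS_USO: "is_USO n (DS n S)"
  unfolding is_USO_def
proof (intro conjI allI impI DS_orient)
  fix U W assume h: "U \<subseteq> W \<and> W \<subseteq> {1..n}"
  then have fin: "finite W" using finite_subset by blast
  show "\<exists>!X. is_sink_in_face (DS n S) U W X"
    unfolding sink_iff[OF conjunct1[OF h] conjunct2[OF h]]
    using sink_exists[OF fin conjunct1[OF h], of S] sink_unique[OF fin] by metis
qed

lemma acyc_gt: "acyclic {(i::nat, j). j < i}"
  unfolding acyclic_def
proof
  fix x
  have "(a, b) \<in> {(i::nat, j). j < i}\<^sup>+ \<Longrightarrow> b < a" for a b
    by (induction rule: trancl_induct) auto
  then show "(x, x) \<notin> {(i::nat, j). j < i}\<^sup>+" by blast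
qed

lemma DS_L: "property_L n (DS n S)"
  unfolding property_L_def
proof (intro allI impI)
  fix V assume V: "V \<subseteq> {1..n}"
  have "Lgraph n (DS n S) V \<subseteq> {(i, j). j < i}"
  proof
    fix p assume p: "p \<in> Lgraph n (DS n S) V"
    obtain i j where pij: "p = (i,j)" by (cases p)
    have i: "i \<in> {1..n} - V" and j: "j \<in> {1..n} - V" and ij: "i \<noteq> j"
      and js: "j \<in> symdiff (outmap (DS n S) V) (outmap (DS n S) (V \<union> {i}))"
      using p unfolding pij Lgraph_def by auto
    have Vi: "V \<union> {i} \<subseteq> {1..n}" using V i by auto
    have ne: "cc S V j \<noteq> cc S (V \<union> {i}) j"
      using js j unfolding outmap_DS[OF V] outmap_DS[OF Vi] symdiff_def by auto
    have "j < i"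
    proof (rule ccontr)
      assume "\<not> j < i"
      then have "i < j" using ij by auto
      then have "\<forall>l>j. (l\<in>V \<longleftrightarrow> l \<in> V \<union> {i})" by auto
      from cc_agree[OF this, of S] have "cc S V j = cc S (V \<union> {i}) j" using ij by auto
      then show False using ne by auto
    qed
    then show "p \<in> {(i, j). j < i}" using pij by auto
  qed
  then show "acyclic (Lgraph n (DS n S) V)" using acyc_gt acyclic_subset by blast
qed

lemma DS_key:
  assumes "B \<subseteq> {1..n}" "B \<noteq> {}"
  shows "(B - {Min B}, symdiff (B - {Min B}) {Min B}) \<in> DS n S \<longleftrightarrow> B \<in> S"
proof -
  have fin: "finite B" using assms finite_subset by blast
  have m: "Min B \<in> B" using Min_in fin assms by auto
  have mle: "\<forall>b\<in>B. Min B \<le> b" using Min_le fin by auto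
  have "insert (Min B) {j\<in>B - {Min B}. Min B < j} = B" using m mle by force
  then have "cc S (B - {Min B}) (Min B) \<longleftrightarrow> B \<in> S" unfolding cc_def by auto
  then show ?thesis unfolding DS_edge using assms m by auto
qed

lemma DS_inj: "inj_on (DS n) (Pow (Pow {1..n} - {{}}))"
proof (rule inj_onI)
  have sub: "S \<subseteq> S'" if "S \<in> Pow (Pow {1..n} - {{}})" "DS n S = DS n S'" for S S'
  proof
    fix B assume "B \<in> S"
    then have "B \<subseteq> {1..n}" "B \<noteq> {}" using that by auto
    then show "B \<in> S'" using DS_key[of B n S] DS_key[of B n S'] \<open>B \<in> S\<close> that(2) by auto
  qed
  fix S S' assume "S \<in> Pow (Pow {1..n} - {{}})" "S' \<in> Pow (Pow {1..n} - {{}})" "DS n S = DS n S'"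
  then show "S = S'" using sub by (metis subset_antisym)
qed

theorem theorem3p5:
  fixes n :: nat
  assumes "n \<ge> 1"
  shows "card {D. cube_orientation n D \<and> is_USO n D \<and> property_L n D} \<ge> 2 ^ (2 ^ n - 1)"
proof -
  let ?Q = "Pow {1..n} - {{}}"
  let ?T = "{D. cube_orientation n D \<and> is_USO n D \<and> property_L n D}"
  have cQ: "card ?Q = 2 ^ n - 1" by (simp add: card_Pow)
  have finQ: "finite ?Q" by simp
  let ?E = "(\<lambda>(V,i). (V, symdiff V {i})) ` (Pow {1..n} \<times> {1..n})"
  have "{(V, symdiff V {i}) |V i. V \<subseteq> {1..n} \<and> i \<in> {1..n}} \<subseteq> ?E"
  proof
    fix x assume "x \<in> {(V, symdiff V {i}) |V i. V \<subseteq> {1..n} \<and> i \<in> {1..n}}"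
    then obtain V i where "x = (V, symdiff V {i})" "V \<subseteq> {1..n}" "i \<in> {1..n}" by blast
    then show "x \<in> ?E" by (intro rev_image_eqI[of "(V,i)"]) auto
  qed
  note ee = this
  have "?T \<subseteq> Pow ?E"
  proof
    fix D assume "D \<in> ?T"
    then have "D \<subseteq> {(V, symdiff V {i}) |V i. V \<subseteq> {1..n} \<and> i \<in> {1..n}}"
      unfolding cube_orientation_def by simp
    then show "D \<in> Pow ?E" using ee by (intro PowI) (rule subset_trans)
  qed
  then have finT: "finite ?T" by (rule finite_subset) simp
  have img: "DS n ` Pow ?Q \<subseteq> ?T" using DS_orient DS_USO DS_L by auto
  have "card (DS n ` Pow ?Q) = 2 ^ (2 ^ n - 1)"
  proof -
    have "card (DS n ` Pow ?Q) = card (Pow ?Q)" by (rule card_image[OF DS_inj])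
    also have "\<dots> = 2 ^ card ?Q" by (rule card_Pow[OF finQ])
    finally show ?thesis unfolding cQ .
  qed
  then show ?thesis using card_mono[OF finT img] by simp
qed

end
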